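(* For every positive integer $t$ and every finite graph $G$ admitting a vertex cover of size at most $t$, the hypergraph of balls in $G$ has a proper sample compression scheme of size $t+4$.
   Context: A vertex cover of $G$ is a set $R\subseteq V(G)$ meeting every edge. A hypergraph $H$ is a pair $(V(H),E(H))$ with $V(H)$ finite and $E(H)\subseteq 2^{V(H)}$. A sample of $H$ is a pair $(X^+,X^-)$ of subsets of $V(H)$ such that some $e\in E(H)$ has $X^+\subseteq e$, $X^-\cap e=\emptyset$; $\mathcal{S}(H)$ is the set of samples. $S$ realizes $(X^+,X^-)$ if $X^+\subseteq S$, $S\cap X^-=\emptyset$. A subsample of $(X^+,X^-)$ is a sample $(Y^+,Y^-)$ with $Y^\pm\subseteq X^\pm$, of size $|Y^+\cup Y^-|$. A sample compression scheme is a pair $(\kappa,\rho)$ with $\kappa:\mathcal{S}(H)\to\mathcal{S}(H)\times\{0,1\}^*$, $\rho:\mathcal{S}(H)\times\{0,1\}^*\to 2^{V(H)}$, such that for every sample the first component of $\kappa(X^+,X^-)$ is a subsample of it and $\rho(\kappa(X^+,X^-))$ realizes it; its size is $k_1+k_2$ with $k_1$ the maximum size of the subsample and $k_2$ the maximum bitstring length output by $\kappa$; it is proper if every value of $\rho$ is a hyperedge. The hypergraph of balls in $G$ has vertex set $V(G)$ and hyperedges all $B_G(c,r)=\{v:\mathrm{dist}_G(c,v)\le r\}$ for $c\in V(G)$, $r$ an integer. *)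

theory Defs
  imports Main "HOL-Library.Extended_Nat"
begin

definition graph :: "'a set \<Rightarrow> ('a \<times> 'a) set \<Rightarrow> bool" where
  "graph V Ed \<longleftrightarrow> Ed \<subseteq> V \<times> V \<and> sym Ed \<and> irrefl Ed"

definition vertex_cover :: "'a set \<Rightarrow> ('a \<times> 'a) set \<Rightarrow> 'a set \<Rightarrow> bool" where
  "vertex_cover V Ed R \<longleftrightarrow> R \<subseteq> V \<and> (\<forall>(u,v)\<in>Ed. u \<in> R \<or> v \<in> R)"

text \<open>Graph distance (infinite if no path): least n such that v is reachable from u in n steps.\<close>
definition gdist :: "('a \<times> 'a) set \<Rightarrow> 'a \<Rightarrow> 'a \<Rightarrow> enat" where
  "gdist Ed u v = (INF n \<in> {n. (u, v) \<in> Ed ^^ n}. enat n)"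

definition ball :: "'a set \<Rightarrow> ('a \<times> 'a) set \<Rightarrow> 'a \<Rightarrow> int \<Rightarrow> 'a set" where
  "ball V Ed c r = {v \<in> V. r \<ge> 0 \<and> gdist Ed c v \<le> enat (nat r)}"

definition ball_edges :: "'a set \<Rightarrow> ('a \<times> 'a) set \<Rightarrow> 'a set set" where
  "ball_edges V Ed = {ball V Ed c r | c r. c \<in> V}"

definition samples :: "'a set \<Rightarrow> 'a set set \<Rightarrow> ('a set \<times> 'a set) set" where
  "samples VH EH = {(Xp, Xm). Xp \<subseteq> VH \<and> Xm \<subseteq> VH \<and>
      (\<exists>e\<in>EH. Xp \<subseteq> e \<and> Xm \<inter> e = {})}"

definition realizes :: "'a set \<Rightarrow> 'a set \<times> 'a set \<Rightarrow> bool" where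
  "realizes S X \<longleftrightarrow> fst X \<subseteq> S \<and> S \<inter> snd X = {}"

definition subsample :: "'a set \<Rightarrow> 'a set set \<Rightarrow> 'a set \<times> 'a set \<Rightarrow> 'a set \<times> 'a set \<Rightarrow> bool" where
  "subsample VH EH Y X \<longleftrightarrow> Y \<in> samples VH EH \<and> fst Y \<subseteq> fst X \<and> snd Y \<subseteq> snd X"

definition sample_size :: "'a set \<times> 'a set \<Rightarrow> nat" where
  "sample_size Y = card (fst Y \<union> snd Y)"

definition compression_scheme ::
  "'a set \<Rightarrow> 'a set set \<Rightarrow> ('a set \<times> 'a set \<Rightarrow> ('a set \<times> 'a set) \<times> bool list)
     \<Rightarrow> (('a set \<times> 'a set) \<times> bool list \<Rightarrow> 'a set) \<Rightarrow> nat \<Rightarrow> bool" where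
  "compression_scheme VH EH \<kappa> \<rho> k \<longleftrightarrow>
     (\<forall>X\<in>samples VH EH. subsample VH EH (fst (\<kappa> X)) X \<and> realizes (\<rho> (\<kappa> X)) X
        \<and> \<rho> (\<kappa> X) \<subseteq> VH) \<and>
     (\<exists>k1 k2. k1 + k2 \<le> k \<and>
        (\<forall>X\<in>samples VH EH. sample_size (fst (\<kappa> X)) \<le> k1 \<and> length (snd (\<kappa> X)) \<le> k2))"

definition proper_scheme ::
  "'a set \<Rightarrow> 'a set set \<Rightarrow> ('a set \<times> 'a set \<Rightarrow> ('a set \<times> 'a set) \<times> bool list)
     \<Rightarrow> (('a set \<times> 'a set) \<times> bool list \<Rightarrow> 'a set) \<Rightarrow> bool" where
  "proper_scheme VH EH \<kappa> \<rho> \<longleftrightarrow> (\<forall>Y\<in>samples VH EH. \<forall>w. \<rho> (Y, w) \<in> EH)"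

end

theory Submission
  imports Defs
begin

lemma gdist_eq:
  "gdist Ed u v = (if {n. (u,v) \<in> Ed ^^ n} = {} then \<infinity>
                   else enat (LEAST n. (u,v) \<in> Ed ^^ n))"
proof (cases "{n. (u,v) \<in> Ed ^^ n} = {}")
  case True
  then show ?thesis unfolding gdist_def by (simp add: top_enat_def)
next
  case False
  then obtain k where k: "(u,v) \<in> Ed ^^ k" by auto
  have "gdist Ed u v = enat (LEAST n. (u,v) \<in> Ed ^^ n)"
    unfolding gdist_def
  proof (rule antisym)
    show "(INF n \<in> {n. (u, v) \<in> Ed ^^ n}. enat n) \<le> enat (LEAST n. (u, v) \<in> Ed ^^ n)"
      by (rule INF_lower) (use LeastI[of "\<lambda>n. (u,v) \<in> Ed ^^ n", OF k] in auto)
    show "enat (LEAST n. (u, v) \<in> Ed ^^ n) \<le> (INF n \<in> {n. (u, v) \<in> Ed ^^ n}. enat n)"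
      by (rule INF_greatest) (auto intro: Least_le)
  qed
  then show ?thesis using False by simp
qed

lemma gdist_le: "(u,v) \<in> Ed ^^ n \<Longrightarrow> gdist Ed u v \<le> enat n"
  unfolding gdist_def by (rule INF_lower) auto

lemma gdist_self: "gdist Ed u u = 0"
proof -
  have "(u,u) \<in> Ed ^^ 0" by simp
  then have "gdist Ed u u \<le> enat 0" by (rule gdist_le)
  then show ?thesis by (metis le_zero_eq zero_enat_def)
qed

lemma gdist_fin: "gdist Ed u v \<le> enat k \<Longrightarrow> \<exists>n. (u,v) \<in> Ed ^^ n \<and> gdist Ed u v = enat n \<and> n \<le> k"
proof -
  assume a: "gdist Ed u v \<le> enat k"
  then have ne: "{n. (u,v) \<in> Ed ^^ n} \<noteq> {}" by (subst (asm) gdist_eq) (auto split: if_splits)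
  then obtain k0 where "(u,v) \<in> Ed ^^ k0" by auto
  then have "(u,v) \<in> Ed ^^ (LEAST n. (u,v) \<in> Ed ^^ n)" by (rule LeastI)
  moreover have "gdist Ed u v = enat (LEAST n. (u,v) \<in> Ed ^^ n)" using ne by (subst gdist_eq) simp
  ultimately show ?thesis using a by auto
qed

lemma gdist_zero: "gdist Ed u v \<le> enat 0 \<Longrightarrow> v = u"
  using gdist_fin[of Ed u v 0] by auto

lemma path_nonempty: "{w. (c,w) \<in> Ed} = {} \<Longrightarrow> (c,y) \<in> Ed ^^ n \<Longrightarrow> y = c"
proof (cases n)
  case (Suc m)
  assume "{w. (c,w) \<in> Ed} = {}" "(c,y) \<in> Ed ^^ n"
  then show ?thesis using Suc relpow_Suc_D2[where x=c and z=y and R=Ed and n=m] by blast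
qed auto

lemma twin_path:
  assumes "{w. (c,w) \<in> Ed} = {w. (c',w) \<in> Ed}" "v \<noteq> c" "(c,v) \<in> Ed ^^ n"
  shows "(c',v) \<in> Ed ^^ n"
proof (cases n)
  case 0 then show ?thesis using assms by auto
next
  case (Suc m)
  then obtain w where "(c,w) \<in> Ed" "(w,v) \<in> Ed ^^ m" using assms relpow_Suc_D2 by metis
  moreover have "(c',w) \<in> Ed" using assms(1) calculation(1) by blast
  ultimately show ?thesis using Suc relpow_Suc_I2 by metis
qed

lemma twin_dist:
  assumes "{w. (c,w) \<in> Ed} = {w. (c',w) \<in> Ed}" "v \<noteq> c" "v \<noteq> c'"
  shows "gdist Ed c v = gdist Ed c' v"
proof -
  have "{n. (c,v) \<in> Ed ^^ n} = {n. (c',v) \<in> Ed ^^ n}"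
    using twin_path[OF assms(1,2)] twin_path[OF assms(1)[symmetric] assms(3)] by blast
  then show ?thesis unfolding gdist_def by simp
qed

lemma twin_le2:
  assumes "{w. (c,w) \<in> Ed} = {w. (c',w) \<in> Ed}" "{w. (c,w) \<in> Ed} \<noteq> {}" "sym Ed"
  shows "gdist Ed c c' \<le> 2"
proof -
  obtain w where w: "(c,w) \<in> Ed" using assms by auto
  then have "(c',w) \<in> Ed" using assms(1) by auto
  then have "(w,c') \<in> Ed" using assms(3) by (auto dest: symD)
  then have "(c,c') \<in> Ed ^^ Suc (Suc 0)" using w by (auto intro: relpow_Suc_I2)
  then have "gdist Ed c c' \<le> enat (Suc (Suc 0))" by (rule gdist_le)
  moreover have "enat (Suc (Suc 0)) = 2" by (simp add: numeral_eq_enat)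
  ultimately show ?thesis by simp
qed

lemma in_ball: "v \<in> ball V Ed c r \<longleftrightarrow> v \<in> V \<and> 0 \<le> r \<and> gdist Ed c v \<le> enat (nat r)"
  unfolding ball_def by auto

lemma ball_mono: "\<rho> \<le> r \<Longrightarrow> ball V Ed c \<rho> \<subseteq> ball V Ed c r"
  unfolding ball_def by auto (meson dual_order.trans enat_ord_simps(1) nat_mono)

lemma twin_ball:
  assumes "{w. (c,w) \<in> Ed} = {w. (c',w) \<in> Ed}" "{w. (c,w) \<in> Ed} \<noteq> {}" "sym Ed"
    "2 \<le> \<rho>"
  shows "ball V Ed c \<rho> = ball V Ed c' \<rho>"
proof -
  have a: "gdist Ed c c' \<le> 2" by (rule twin_le2[OF assms(1-3)])
  have b: "gdist Ed c' c \<le> 2" by (rule twin_le2) (use assms in auto)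
  have "enat 2 \<le> enat (nat \<rho>)" using assms(4) by simp
  then have 2: "(2::enat) \<le> enat (nat \<rho>)" by (simp add: numeral_eq_enat)
  have "gdist Ed c x \<le> enat (nat \<rho>) \<longleftrightarrow> gdist Ed c' x \<le> enat (nat \<rho>)" for x
  proof (cases "x = c \<or> x = c'")
    case True
    then show ?thesis using a b 2 gdist_self[of Ed c] gdist_self[of Ed c']
      by (metis order.trans zero_le)
  next
    case False
    then show ?thesis using twin_dist[OF assms(1)] by metis
  qed
  then show ?thesis unfolding ball_def by auto
qed


lemma toint_le2: "e \<le> (2::enat) \<Longrightarrow> int (the_enat e) \<le> 2"
  by (cases e) (auto simp: numeral_eq_enat)

locale bsc =
  fixes V :: "'a set" and Ed :: "('a \<times> 'a) set" and R :: "'a set"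
    and g :: "'a \<Rightarrow> nat" and Rl :: "'a list"
  assumes finV: "finite V" and gr: "graph V Ed" and vc: "vertex_cover V Ed R"
    and injg: "inj_on g V" and Rl: "set Rl = R" "distinct Rl"
begin

definition nb where "nb v = {u. (v,u) \<in> Ed}"
definition minel :: "'a set \<Rightarrow> 'a" where "minel S = arg_min g (\<lambda>s. s \<in> S)"

lemma minel: "s \<in> S \<Longrightarrow> minel S \<in> S \<and> (\<forall>s'\<in>S. g (minel S) \<le> g s')"
  unfolding minel_def using arg_min_nat_lemma[of "\<lambda>s. s \<in> S" s g] by auto

definition dec :: "bool list \<Rightarrow> 'a set" where
  "dec w = {Rl ! i | i. i < length Rl \<and> i < length w \<and> w ! i}"
definition enc :: "'a set \<Rightarrow> bool list" where "enc A = map (\<lambda>u. u \<in> A) Rl"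

lemma dec_enc: "dec (enc A) = A \<inter> R"
  unfolding dec_def enc_def using Rl(1) by (auto simp: in_set_conv_nth) force

lemma len_enc: "length (enc A) = length Rl"
  unfolding enc_def by simp

definition cls where "cls A = {v \<in> V. nb v = A}"
definition toint :: "enat \<Rightarrow> int" where "toint e = int (the_enat e)"

definition cr :: "'a set \<times> 'a set \<Rightarrow> bool list \<Rightarrow> 'a \<times> int" where
  "cr Y w = (let m = take 3 w; A = dec (drop 3 w); y = (SOME y. y \<in> fst Y) in
     if m = [False,False,True] then (y, 0)
     else if m = [False,True,False] then (y, 1)
     else if m = [False,True,True] then (minel A, toint (gdist Ed (minel A) y))
     else if m = [True,False,False] then
       (minel (cls A), max 2 (toint (gdist Ed (minel (cls A)) y)))
     else if m = [True,False,True] then (minel {v \<in> cls A. \<forall>z\<in>snd Y. g z < g v}, 1)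
     else (y, -1))"

definition rho :: "'a set \<times> 'a set \<Rightarrow> bool list \<Rightarrow> 'a set" where
  "rho Y w = (if fst (cr Y w) \<in> V then ball V Ed (fst (cr Y w)) (snd (cr Y w)) else {})"

lemma rho_sub: "rho Y w \<subseteq> V"
  unfolding rho_def ball_def by auto

lemma rho_edge:
  assumes "V \<noteq> {}" shows "rho Y w \<in> ball_edges V Ed"
proof (cases "fst (cr Y w) \<in> V")
  case True then show ?thesis unfolding rho_def ball_edges_def by auto
next
  case False
  obtain v where "v \<in> V" using assms by auto
  moreover have "ball V Ed v (-1) = {}" unfolding ball_def by auto
  ultimately show ?thesis using False unfolding rho_def ball_edges_def by force
qed

lemma main:
  assumes "X \<in> samples V (ball_edges V Ed)"
  shows "\<exists>Y w. fst Y \<subseteq> fst X \<and> snd Y \<subseteq> snd X \<and> card (fst Y \<union> snd Y) \<le> 1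
     \<and> length w \<le> length Rl + 3 \<and> realizes (rho Y w) X"
proof -
  obtain P M where X: "X = (P, M)" by (cases X)
  from assms obtain c r where c: "c \<in> V" and PV: "P \<subseteq> V" "M \<subseteq> V"
    and PB: "P \<subseteq> ball V Ed c r" and MB: "M \<inter> ball V Ed c r = {}"
    unfolding samples_def ball_edges_def X by auto
  have rz: "realizes S X \<longleftrightarrow> P \<subseteq> S \<and> S \<inter> M = {}" for S
    unfolding realizes_def X by auto
  have symE: "sym Ed" using gr unfolding graph_def by auto
  show ?thesis
  proof (cases "P = {}")
    case True
    have "rho ({},{}) [] = {}" unfolding rho_def cr_def by (simp add: Let_def ball_def)
    then show ?thesis using True X rz by (intro exI[of _ "({},{})"] exI[of _ "[]"]) auto
  next
    case False
    then obtain x0 where "x0 \<in> P" by auto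
    then have "x0 \<in> ball V Ed c r" using PB by blast
    then have r0: "0 \<le> r" by (simp add: in_ball)
    have finP: "finite P" using PV finV finite_subset by blast
    define mx where "mx = Max (gdist Ed c ` P)"
    have "mx \<in> gdist Ed c ` P" unfolding mx_def using finP False by (intro Max_in) auto
    then obtain x where x: "x \<in> P" "gdist Ed c x = mx" by auto
    have xmax: "\<forall>y\<in>P. gdist Ed c y \<le> gdist Ed c x"
      using x finP unfolding mx_def by auto
    have "x \<in> ball V Ed c r" using x PB by blast
    then have "gdist Ed c x \<le> enat (nat r)" by (simp add: in_ball)
    then obtain n0 where n0: "gdist Ed c x = enat n0" "n0 \<le> nat r" using gdist_fin[of Ed c x "nat r"] by auto
    have F: "realizes (ball V Ed c \<rho>) X" if "int n0 \<le> \<rho>" "\<rho> \<le> r" for \<rho>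
    proof -
      have "P \<subseteq> ball V Ed c \<rho>"
      proof
        fix y assume y: "y \<in> P"
        then have "gdist Ed c y \<le> enat n0" using xmax n0 by auto
        also have "\<dots> \<le> enat (nat \<rho>)" using that by simp
        finally show "y \<in> ball V Ed c \<rho>" using y PV that by (auto simp: in_ball)
      qed
      moreover have "ball V Ed c \<rho> \<inter> M = {}" using ball_mono[OF that(2), of V Ed c] MB by auto
      ultimately show ?thesis using rz by auto
    qed
    have cc: "c \<in> ball V Ed c r" using c r0 gdist_self[of Ed c] by (auto simp: in_ball)
    show ?thesis
    proof (cases "c \<in> R")
      case True
      let ?w = "[False,True,True] @ enc {c}"
      have d: "dec (drop 3 ?w) = {c}" using dec_enc True by auto
      have mc: "minel {c} = c" using minel[of c "{c}"] by auto
      have "cr ({x},{}) ?w = (c, toint (gdist Ed c x))" unfolding cr_def Let_def using d mc by simp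
      then have "rho ({x},{}) ?w = ball V Ed c (int n0)" using c n0 unfolding rho_def toint_def by simp
      moreover have "realizes (ball V Ed c (int n0)) X" using F n0 r0 by simp
      ultimately show ?thesis using x X len_enc
        by (intro exI[of _ "({x},{})"] exI[of _ ?w]) auto
    next
      case cR: False
      have nbR: "nb c \<subseteq> R" using vc cR unfolding vertex_cover_def nb_def by auto
      show ?thesis
      proof (cases "r = 0 \<or> nb c = {}")
        case True
        have "P \<subseteq> {c}"
        proof
          fix y assume "y \<in> P"
          then have "y \<in> ball V Ed c r" using PB by blast
          then have "gdist Ed c y \<le> enat (nat r)" by (simp add: in_ball)
          then obtain n where n: "(c,y) \<in> Ed ^^ n" "n \<le> nat r" using gdist_fin[of Ed c y "nat r"] by auto
          show "y \<in> {c}"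
          proof (cases "r = 0")
            case True then show ?thesis using n by auto
          next
            case False then have "nb c = {}" using \<open>r = 0 \<or> nb c = {}\<close> by auto
            then show ?thesis using path_nonempty[OF _ n(1)] unfolding nb_def by auto
          qed
        qed
        then have Pc: "P = {c}" using False by auto
        let ?w = "[False,False,True]"
        have "cr ({c},{}) ?w = (c, 0)" unfolding cr_def Let_def by simp
        then have "rho ({c},{}) ?w = ball V Ed c 0" using c unfolding rho_def by simp
        moreover have "n0 = 0" using x Pc n0 gdist_self[of Ed c] by (simp add: zero_enat_def)
        then have "realizes (ball V Ed c 0) X" using F r0 by simp
        ultimately show ?thesis using Pc X
          by (intro exI[of _ "({c},{})"] exI[of _ ?w]) auto
      next
        case False
        then have r1: "1 \<le> r" and nbne: "nb c \<noteq> {}" using r0 by auto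
        define N where "N = nb c"
        define C where "C = cls N"
        have cC: "c \<in> C" unfolding C_def cls_def N_def using c by auto
        have decN: "dec (drop 3 (m @ enc N)) = N" if "length m = 3" for m
          using that dec_enc nbR unfolding N_def by auto
        have CV: "C \<subseteq> V" and Cnb: "\<And>v. v \<in> C \<Longrightarrow> nb v = N" unfolding C_def cls_def by auto
        have cM: "c \<notin> M" using cc MB by auto
        consider "r = 1 \<and> c \<in> P" | "r = 1 \<and> c \<notin> P" | "2 \<le> r" using r1 by linarith
        then show ?thesis
        proof cases
          case 1
          let ?w = "[False,True,False]"
          have "cr ({c},{}) ?w = (c, 1)" unfolding cr_def Let_def by simp
          then have "rho ({c},{}) ?w = ball V Ed c r" using c 1 unfolding rho_def by simp
          then show ?thesis using 1 X PB MB rz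
            by (intro exI[of _ "({c},{})"] exI[of _ ?w]) auto
        next
          case 2
          define S where "S = C - M"
          have cS: "c \<in> S" unfolding S_def using cC cM by auto
          define cs where "cs = minel S"
          have cs: "cs \<in> S" "\<forall>s\<in>S. g cs \<le> g s" using minel[OF cS] unfolding cs_def by auto
          obtain Q where Q: "Q \<subseteq> M" "card Q \<le> 1" "minel {v \<in> C. \<forall>z\<in>Q. g z < g v} \<in> S"
          proof (cases "cs = minel C")
            case True
            then show ?thesis using that[of "{}"] cs by auto
          next
            case False
            define Pd where "Pd = {v \<in> C. g v < g cs}"
            have mC: "minel C \<in> C" "\<forall>s\<in>C. g (minel C) \<le> g s" using minel[OF cC] by auto
            have csC: "cs \<in> C" using cs unfolding S_def by auto
            have "g (minel C) \<noteq> g cs" using False injg mC(1) csC CV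
              by (metis inj_onD subsetD)
            then have "minel C \<in> Pd" using mC csC unfolding Pd_def
              using le_neq_implies_less by blast
            moreover have "finite Pd" unfolding Pd_def using CV finV by (auto intro: finite_subset)
            ultimately have "Max (g ` Pd) \<in> g ` Pd" by (intro Max_in) auto
            then obtain p where p1: "p \<in> Pd" "g p = Max (g ` Pd)" by auto
            have "\<forall>v\<in>Pd. g v \<le> g p" using p1(2) \<open>finite Pd\<close> by auto
            note p = p1(1) this
            have pM: "p \<in> M"
            proof (rule ccontr)
              assume "p \<notin> M"
              then have "p \<in> S" using p unfolding Pd_def S_def by auto
              then show False using cs p unfolding Pd_def by auto
            qed
            define D where "D = {v \<in> C. \<forall>z\<in>{p}. g z < g v}"
            have csD: "cs \<in> D" using p csC unfolding D_def Pd_def by auto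
            define e where "e = minel D"
            have e: "e \<in> D" "g e \<le> g cs" using minel[OF csD] csD unfolding e_def by auto
            have "\<not> g e < g cs"
            proof
              assume "g e < g cs"
              then have "e \<in> Pd" using e unfolding D_def Pd_def by auto
              then show False using p e unfolding D_def by auto
            qed
            then have "g e = g cs" using e by auto
            then have "e = cs" using injg e(1) csC CV unfolding D_def by (auto dest: inj_onD)
            then show ?thesis using that[of "{p}"] pM cs unfolding e_def D_def by auto
          qed
          define c' where "c' = minel {v \<in> C. \<forall>z\<in>Q. g z < g v}"
          have c': "c' \<in> C" "c' \<notin> M" using Q(3) unfolding c'_def S_def by auto
          have c'V: "c' \<in> V" using c' CV by auto
          have nbc': "nb c = nb c'" using Cnb[OF c'(1)] unfolding N_def by simp
          let ?w = "[True,False,True] @ enc N"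
          have "cr ({},Q) ?w = (c', 1)" unfolding cr_def Let_def c'_def C_def
            using decN[of "[True,False,True]"] by simp
          then have rb: "rho ({},Q) ?w = ball V Ed c' 1" using c'V unfolding rho_def by simp
          have "realizes (ball V Ed c' 1) X"
          proof -
            have "P \<subseteq> ball V Ed c' 1"
            proof
              fix y assume y: "y \<in> P"
              show "y \<in> ball V Ed c' 1"
              proof (cases "y = c'")
                case True then show ?thesis using c'V gdist_self[of Ed c'] by (simp add: in_ball)
              next
                case False
                have "y \<noteq> c" using y 2 by auto
                then have "gdist Ed c' y = gdist Ed c y" using twin_dist[where Ed=Ed and c=c and c'=c' and v=y] nbc' False
                  unfolding nb_def by auto
                then show ?thesis using y PB 2 by (auto simp: in_ball)
              qed
            qed
            moreover have "ball V Ed c' 1 \<inter> M = {}"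
            proof (rule ccontr)
              assume "ball V Ed c' 1 \<inter> M \<noteq> {}"
              then obtain y where y: "y \<in> ball V Ed c' 1" "y \<in> M" by auto
              then have "y \<noteq> c'" "y \<noteq> c" using c' cM by auto
              then have "gdist Ed c' y = gdist Ed c y" using twin_dist[where Ed=Ed and c=c and c'=c' and v=y] nbc'
                unfolding nb_def by auto
              then have "y \<in> ball V Ed c r" using y 2 by (auto simp: in_ball)
              then show False using y MB by auto
            qed
            ultimately show ?thesis using rz by auto
          qed
          then show ?thesis using rb Q X len_enc
            by (intro exI[of _ "({},Q)"] exI[of _ ?w]) auto
        next
          case 3
          define c' where "c' = minel C"
          have c': "c' \<in> C" using minel[OF cC] unfolding c'_def by auto
          have c'V: "c' \<in> V" using c' CV by auto
          have nbc': "nb c = nb c'" using Cnb[OF c'] unfolding N_def by simp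
          have e1: "gdist Ed c c' \<le> 2" using twin_le2[where Ed=Ed and c=c and c'=c'] nbc' nbne symE
            unfolding nb_def by auto
          have e2: "gdist Ed c' c \<le> 2" using twin_le2[where Ed=Ed and c=c' and c'=c] nbc' nbne symE
            unfolding nb_def by auto
          define \<rho> where "\<rho> = max 2 (toint (gdist Ed c' x))"
          have rho_eq: "\<rho> = max 2 (int n0)"
          proof (cases "x = c \<or> x = c'")
            case True
            then show ?thesis
            proof
              assume xc: "x = c"
              then have "n0 = 0" using n0 gdist_self[of Ed c] by (simp add: zero_enat_def)
              then show ?thesis using toint_le2[OF e2] xc unfolding \<rho>_def toint_def by simp
            next
              assume xc: "x = c'"
              then have "toint (gdist Ed c' x) = 0" using gdist_self[of Ed c']
                unfolding toint_def by (simp add: zero_enat_def)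
              moreover have "int n0 \<le> 2" using toint_le2[OF e1] xc n0 by simp
              ultimately show ?thesis unfolding \<rho>_def by simp
            qed
          next
            case False
            then have "gdist Ed c' x = gdist Ed c x" using twin_dist[where Ed=Ed and c=c and c'=c' and v=x] nbc'
              unfolding nb_def by auto
            then show ?thesis unfolding \<rho>_def toint_def using n0 by simp
          qed
          let ?w = "[True,False,False] @ enc N"
          have "cr ({x},{}) ?w = (c', \<rho>)" unfolding cr_def Let_def c'_def C_def \<rho>_def
            using decN[of "[True,False,False]"] by simp
          then have "rho ({x},{}) ?w = ball V Ed c' \<rho>" using c'V unfolding rho_def by simp
          also have "\<dots> = ball V Ed c \<rho>"
            using twin_ball[where Ed=Ed and c=c and c'=c' and \<rho>=\<rho> and V=V] nbc' nbne symE rho_eq unfolding nb_def by auto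
          finally have rb: "rho ({x},{}) ?w = ball V Ed c \<rho>" .
          have "realizes (ball V Ed c \<rho>) X" using F rho_eq 3 n0 by auto
          then show ?thesis using rb x X len_enc
            by (intro exI[of _ "({x},{})"] exI[of _ ?w]) auto
        qed
      qed
    qed
  qed
qed

end

lemma samples_sub:
  assumes "X \<in> samples VH EH" "fst Y \<subseteq> fst X" "snd Y \<subseteq> snd X"
  shows "Y \<in> samples VH EH"
proof -
  obtain P M where X: "X = (P,M)" by (cases X)
  obtain P' M' where Y: "Y = (P',M')" by (cases Y)
  from assms(1) obtain e where e: "e \<in> EH" "P \<subseteq> e" "M \<inter> e = {}" "P \<subseteq> VH" "M \<subseteq> VH"
    unfolding X samples_def by auto
  have "P' \<subseteq> e" "M' \<inter> e = {}" "P' \<subseteq> VH" "M' \<subseteq> VH" using e assms(2,3) unfolding X Y by auto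
  then show ?thesis using e(1) unfolding Y samples_def by auto
qed

theorem theorem1p3:
  fixes V :: "'a set" and Ed :: "('a \<times> 'a) set" and t :: nat
  assumes "t \<ge> 1" and "finite V" and "graph V Ed"
    and "\<exists>R. vertex_cover V Ed R \<and> card R \<le> t"
  shows "\<exists>\<kappa> \<rho>. compression_scheme V (ball_edges V Ed) \<kappa> \<rho> (t + 4)
           \<and> proper_scheme V (ball_edges V Ed) \<kappa> \<rho>"
proof -
  obtain R where R: "vertex_cover V Ed R" "card R \<le> t" using assms(4) by auto
  have finR: "finite R" using R(1) assms(2) unfolding vertex_cover_def by (auto intro: finite_subset)
  obtain g :: "'a \<Rightarrow> nat" and n :: nat where g: "g ` V = {i. i < n}" "inj_on g V"
    using finite_imp_inj_to_nat_seg[OF assms(2)] by blast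
  obtain Rl where Rl: "set Rl = R" "distinct Rl" using finite_distinct_list[OF finR] by blast
  interpret b: bsc V Ed R g Rl
    using assms(2,3) R(1) g(2) Rl by unfold_locales
  have lenRl: "length Rl \<le> t" using distinct_card[OF Rl(2)] Rl(1) R(2) by simp
  define good where "good X p \<longleftrightarrow> fst (fst p) \<subseteq> fst X \<and> snd (fst p) \<subseteq> snd X
     \<and> card (fst (fst p) \<union> snd (fst p)) \<le> 1 \<and> length (snd p) \<le> length Rl + 3
     \<and> realizes (b.rho (fst p) (snd p)) X" for X p
  define \<kappa> where "\<kappa> X = (SOME p. good X p)" for X
  define \<rho> where "\<rho> = (\<lambda>p. b.rho (fst p) (snd p))"
  have kg: "good X (\<kappa> X)" if XS: "X \<in> samples V (ball_edges V Ed)" for X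
  proof -
    obtain Y w where "fst Y \<subseteq> fst X \<and> snd Y \<subseteq> snd X \<and> card (fst Y \<union> snd Y) \<le> 1
     \<and> length w \<le> length Rl + 3 \<and> realizes (b.rho Y w) X" using b.main[OF XS] by blast
    then have "good X (Y,w)" unfolding good_def by simp
    then show ?thesis unfolding \<kappa>_def by (rule someI)
  qed
  have cs: "compression_scheme V (ball_edges V Ed) \<kappa> \<rho> (t + 4)"
    unfolding compression_scheme_def
  proof (intro conjI ballI)
    fix X assume X: "X \<in> samples V (ball_edges V Ed)"
    have gX: "fst (fst (\<kappa> X)) \<subseteq> fst X" "snd (fst (\<kappa> X)) \<subseteq> snd X"
      using kg[OF X] unfolding good_def by auto
    show "subsample V (ball_edges V Ed) (fst (\<kappa> X)) X"
      unfolding subsample_def using samples_sub[OF X gX] gX by blast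
    show "realizes (\<rho> (\<kappa> X)) X" using kg[OF X] unfolding good_def \<rho>_def by auto
    show "\<rho> (\<kappa> X) \<subseteq> V" unfolding \<rho>_def using b.rho_sub by auto
  next
    show "\<exists>k1 k2. k1 + k2 \<le> t + 4 \<and> (\<forall>X\<in>samples V (ball_edges V Ed).
        sample_size (fst (\<kappa> X)) \<le> k1 \<and> length (snd (\<kappa> X)) \<le> k2)"
    proof -
      have "sample_size (fst (\<kappa> X)) \<le> 1 \<and> length (snd (\<kappa> X)) \<le> t + 3"
        if X: "X \<in> samples V (ball_edges V Ed)" for X
        using kg[OF X] lenRl unfolding good_def sample_size_def by auto
      then show ?thesis by (intro exI[of _ 1] exI[of _ "t + 3"]) auto
    qed
  qed
  have pr: "proper_scheme V (ball_edges V Ed) \<kappa> \<rho>"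
    unfolding proper_scheme_def
  proof (intro ballI allI)
    fix Y w assume Y: "Y \<in> samples V (ball_edges V Ed)"
    then have "ball_edges V Ed \<noteq> {}" unfolding samples_def by auto
    then have "V \<noteq> {}" unfolding ball_edges_def by auto
    then show "\<rho> (Y, w) \<in> ball_edges V Ed" unfolding \<rho>_def using b.rho_edge by simp
  qed
  show ?thesis using cs pr by blast
qed

end
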